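(* Let $\mathbf{v}(x)\in\mathbb{R}^K$, $x$ ranging over a finite index set, with $\mathbf{v}(x)\ne\mathbf{0}$ for all $x$, let $\lambda_F\ge0$, and let $\mathbf{S}^{(k)}$ be a real invertible $K\times K$ matrix. Define, for invertible $K\times K$ matrices $\mathbf{S}$, $$R_F^{(k)}(\mathbf{S})=\sum_x\frac{0.5}{\|\mathbf{S}^{(k)}\mathbf{v}(x)\|_2}\|\mathbf{S}\mathbf{v}(x)\|_2^2-\tfrac12\log\det(\mathbf{S}\mathbf{S}^T)+\tfrac{\lambda_F}{2}\|\mathbf{S}\|_F^2,$$ and $\mathbf{A}_k=\sum_x\frac{1}{\|\mathbf{S}^{(k)}\mathbf{v}(x)\|_2}\mathbf{v}(x)\mathbf{v}(x)^T$ with eigendecomposition $\mathbf{A}_k=\mathbf{U}_k\mathbf{D}_k\mathbf{U}_k^T$ ($\mathbf{U}_k$ orthogonal, $\mathbf{D}_k$ diagonal). Assume $\mathbf{D}_k+\lambda_F\mathbf{I}$ is positive definite. Then the minimum of $R_F^{(k)}$ over $\mathbf{S}$ is attained at $\mathbf{S}^{(k+1)}=(\mathbf{D}_k+\lambda_F\mathbf{I})^{-1/2}\mathbf{U}_k^T$.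
   Context: $\|\cdot\|_F$ denotes the Frobenius norm; $R_F^{(k)}$ is the majorizer used in a majorization–minimization scheme for estimating the structure matrix $\mathbf{S}$ of a multivariate Laplacian prior on multi-order signal derivatives $\mathbf{v}(x)=(\mathbf{L}*g)(x)$. *)

theory Defs
  imports "HOL-Analysis.Analysis"
begin

definition frob_norm :: "real^'n^'m \<Rightarrow> real" where
  "frob_norm M = sqrt (\<Sum>i\<in>UNIV. \<Sum>j\<in>UNIV. (M $ i $ j)^2)"

text \<open>Majorizer R_F^(k)(S), with X the finite index set of x, Sk = S^(k).\<close>
definition RF :: "'x set \<Rightarrow> ('x \<Rightarrow> real^'K) \<Rightarrow> real \<Rightarrow> real^'K^'K \<Rightarrow> real^'K^'K \<Rightarrow> real" where
  "RF X v lam Sk S =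
     (\<Sum>x\<in>X. (0.5 / norm (Sk *v v x)) * (norm (S *v v x))^2)
     - 1/2 * ln (det (S ** transpose S))
     + lam / 2 * (frob_norm S)^2"

definition Amat :: "'x set \<Rightarrow> ('x \<Rightarrow> real^'K) \<Rightarrow> real^'K^'K \<Rightarrow> real^'K^'K" where
  "Amat X v Sk = (\<Sum>x\<in>X. (1 / norm (Sk *v v x)) *\<^sub>R (\<chi> i j. v x $ i * v x $ j))"

definition diagonal_mat :: "real^'n^'n \<Rightarrow> bool" where
  "diagonal_mat D \<longleftrightarrow> (\<forall>i j. i \<noteq> j \<longrightarrow> D $ i $ j = 0)"

definition orthogonal_mat :: "real^'n^'n \<Rightarrow> bool" where
  "orthogonal_mat U \<longleftrightarrow> transpose U ** U = mat 1 \<and> U ** transpose U = mat 1"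

definition pos_def :: "real^'n^'n \<Rightarrow> bool" where
  "pos_def M \<longleftrightarrow> (\<forall>y. y \<noteq> 0 \<longrightarrow> y \<bullet> (M *v y) > 0)"

text \<open>Power -1/2 of a (positive definite) diagonal matrix, taken entrywise on the diagonal.\<close>
definition diag_inv_sqrt :: "real^'n^'n \<Rightarrow> real^'n^'n" where
  "diag_inv_sqrt D = (\<chi> i j. if i = j then 1 / sqrt (D $ i $ i) else 0)"

end

theory Submission
  imports Defs
begin

lemma row_eq: "row i A = A $ i"
  by (simp add: row_def vec_eq_iff)

lemma gs_exists:
  fixes I :: "'n::finite set"
  assumes "finite I"
  shows "\<forall>A::real^'n^'n. \<exists>B. det B = det A \<and> (\<forall>i\<in>I. \<forall>j\<in>I. i \<noteq> j \<longrightarrow> B$i \<bullet> B$j = 0)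
     \<and> (\<forall>i\<in>I. B$i \<bullet> B$i \<le> A$i \<bullet> A$i) \<and> (\<forall>i. i \<notin> I \<longrightarrow> B$i = A$i)"
using assms proof (induction I rule: finite_induct)
  case empty
  then show ?case by blast
next
  case (insert a I)
  show ?case
  proof
    fix A :: "real^'n^'n"
    obtain B where B1: "det B = det A" and B2: "\<forall>i\<in>I. \<forall>j\<in>I. i \<noteq> j \<longrightarrow> B$i \<bullet> B$j = 0"
      and B3: "\<forall>i\<in>I. B$i \<bullet> B$i \<le> A$i \<bullet> A$i" and B4: "\<forall>i. i \<notin> I \<longrightarrow> B$i = A$i"
      using insert.IH by blast
    define r where "r = B$a"
    have ra: "r = A$a" using B4 insert.hyps(2) r_def by simp
    define p where "p = (\<Sum>i\<in>I. ((r \<bullet> B$i) / (B$i \<bullet> B$i)) *\<^sub>R B$i)"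
    define C where "C = (\<chi> k. if k = a then row a B + (- p) else row k B)"
    have span: "- p \<in> vec.span {row j B |j. j \<noteq> a}"
      unfolding p_def
      apply (rule vec.span_neg)
      apply (rule vec.span_sum)
      apply (subst scalar_mult_eq_scaleR[symmetric])
      apply (rule vec.span_scale)
      apply (rule vec.span_base)
      using insert.hyps(2) by (auto simp: row_eq)
    have detC: "det C = det A" unfolding C_def using det_row_span[OF span] B1 by simp
    have Ca: "C$a = r - p" by (simp add: C_def row_eq r_def)
    have Ck: "k \<noteq> a \<Longrightarrow> C$k = B$k" for k by (simp add: C_def row_eq)
    have orth: "(r - p) \<bullet> B$j = 0" if j: "j \<in> I" for j
    proof -
      have "p \<bullet> B$j = (\<Sum>i\<in>I. ((r \<bullet> B$i) / (B$i \<bullet> B$i)) * (B$i \<bullet> B$j))"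
        unfolding p_def by (simp add: inner_sum_left)
      also have "\<dots> = ((r \<bullet> B$j) / (B$j \<bullet> B$j)) * (B$j \<bullet> B$j)"
      proof -
        have "(\<Sum>i\<in>I - {j}. ((r \<bullet> B$i) / (B$i \<bullet> B$i)) * (B$i \<bullet> B$j)) = 0"
          using B2 j by (intro sum.neutral) auto
        then show ?thesis using insert.hyps(1) j by (simp add: sum.remove)
      qed
      also have "\<dots> = r \<bullet> B$j"
        by (cases "B$j = 0") auto
      finally show ?thesis by (simp add: inner_diff_left)
    qed
    have "(r - p) \<bullet> (\<Sum>i\<in>I. ((r \<bullet> B$i) / (B$i \<bullet> B$i)) *\<^sub>R B$i) = 0"
      by (simp add: inner_sum_right orth)
    then have orthp: "(r - p) \<bullet> p = 0" by (simp only: p_def[symmetric])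
    have nrm: "(r - p) \<bullet> (r - p) \<le> r \<bullet> r"
    proof -
      have "r \<bullet> r = (r - p) \<bullet> (r - p) + p \<bullet> p + 2 * ((r - p) \<bullet> p)"
        by (simp add: algebra_simps inner_commute)
      then show ?thesis using orthp by simp
    qed
    show "\<exists>B. det B = det A \<and> (\<forall>i\<in>insert a I. \<forall>j\<in>insert a I. i \<noteq> j \<longrightarrow> B$i \<bullet> B$j = 0)
     \<and> (\<forall>i\<in>insert a I. B$i \<bullet> B$i \<le> A$i \<bullet> A$i) \<and> (\<forall>i. i \<notin> insert a I \<longrightarrow> B$i = A$i)"
    proof (intro exI conjI)
      show "det C = det A" by (rule detC)
      show "\<forall>i\<in>insert a I. \<forall>j\<in>insert a I. i \<noteq> j \<longrightarrow> C$i \<bullet> C$j = 0"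
        by (metis B2 Ca Ck insert.hyps(2) insert_iff orth inner_commute)
      show "\<forall>i\<in>insert a I. C$i \<bullet> C$i \<le> A$i \<bullet> A$i"
        by (metis B3 Ca Ck nrm ra insert.hyps(2) insert_iff)
      show "\<forall>i. i \<notin> insert a I \<longrightarrow> C$i = A$i"
        using B4 Ck by auto
    qed
  qed
qed

lemma hadamard:
  fixes A :: "real^'n^'n"
  shows "(det A)^2 \<le> (\<Prod>i\<in>UNIV. A$i \<bullet> A$i)"
proof -
  obtain B :: "real^'n^'n" where B1: "det B = det A" and B2: "\<forall>i j. i \<noteq> j \<longrightarrow> B$i \<bullet> B$j = 0"
      and B3: "\<forall>i. B$i \<bullet> B$i \<le> A$i \<bullet> A$i"
    using spec[OF gs_exists[of "UNIV::'n set", OF finite], of A] by auto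
  have BB: "B ** transpose B = (\<chi> i j. B$i \<bullet> B$j)"
    by (simp add: matrix_mult_transpose_dot_row row_eq)
  have "det (B ** transpose B) = (\<Prod>i\<in>UNIV. B$i \<bullet> B$i)"
    unfolding BB by (subst det_diagonal) (use B2 in auto)
  moreover have "det (B ** transpose B) = (det A)^2"
    by (simp add: det_mul B1 power2_eq_square)
  moreover have "(\<Prod>i\<in>UNIV. B$i \<bullet> B$i) \<le> (\<Prod>i\<in>UNIV. A$i \<bullet> A$i)"
    by (rule prod_mono) (use B3 in auto)
  ultimately show ?thesis by simp
qed

lemma logdet:
  fixes N :: "real^'n^'n"
  assumes "det N \<noteq> 0"
  shows "ln (det (N ** transpose N)) \<le> trace (N ** transpose N) - real CARD('n)"
proof -
  have NN: "N ** transpose N = (\<chi> i j. N$i \<bullet> N$j)"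
    by (simp add: matrix_mult_transpose_dot_row row_eq)
  have tr: "trace (N ** transpose N) = (\<Sum>i\<in>UNIV. N$i \<bullet> N$i)"
    unfolding NN trace_def by simp
  have d: "det (N ** transpose N) = (det N)^2"
    by (simp add: det_mul power2_eq_square)
  have pos: "0 < (det N)^2" using assms by simp
  have H: "(det N)^2 \<le> (\<Prod>i\<in>UNIV. N$i \<bullet> N$i)" by (rule hadamard)
  have nz: "N$i \<bullet> N$i \<noteq> 0" for i
  proof
    assume "N$i \<bullet> N$i = 0"
    then have P0: "(\<Prod>i\<in>UNIV. N$i \<bullet> N$i) = 0" by (meson UNIV_I finite prod_zero)
    show False using H pos P0 by linarith
  qed
  have gt: "N$i \<bullet> N$i > 0" for i using nz[of i] inner_ge_zero[of "N$i"] by linarith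
  have "ln ((det N)^2) \<le> ln (\<Prod>i\<in>UNIV. N$i \<bullet> N$i)"
    using H pos by (rule ln_mono)
  also have "\<dots> = (\<Sum>i\<in>UNIV. ln (N$i \<bullet> N$i))"
    by (rule ln_prod) (use nz in auto)
  also have "\<dots> \<le> (\<Sum>i\<in>UNIV. N$i \<bullet> N$i - 1)"
    by (rule sum_mono) (use gt ln_le_minus_one in auto)
  also have "\<dots> = trace (N ** transpose N) - real CARD('n)"
    by (simp add: tr sum_subtractf)
  finally show ?thesis by (simp add: d)
qed

lemma matrix_add_rdistrib': "((A::real^'n^'m) + B) ** C = A ** C + B ** C"
  by (vector matrix_matrix_mult_def sum.distrib[symmetric] field_simps)

lemma trace_lin_add: "trace (((A::real^'n^'n) + B) ** G) = trace (A ** G) + trace (B ** G)"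
  by (simp add: matrix_add_rdistrib' trace_add)

lemma trace_lin_scale: "trace ((c *\<^sub>R (A::real^'n^'n)) ** G) = c * trace (A ** G)"
  by (simp add: trace_def matrix_matrix_mult_def sum_distrib_left mult.assoc)

lemma trace_lin_sum:
  assumes "finite X"
  shows "trace ((\<Sum>x\<in>X. c x *\<^sub>R (Y x::real^'n^'n)) ** G) = (\<Sum>x\<in>X. c x * trace (Y x ** G))"
  using assms
proof (induction X rule: finite_induct)
  case empty
  then show ?case by (simp add: trace_def matrix_matrix_mult_def)
next
  case (insert a X)
  then show ?case by (simp add: trace_lin_add trace_lin_scale)
qed

lemma quad_trace:
  fixes S :: "real^'n^'n" and y :: "real^'n"
  shows "(norm (S *v y))^2 = trace ((\<chi> i j. y $ i * y $ j) ** (transpose S ** S))"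
proof -
  have "(norm (S *v y))^2 = (\<Sum>k\<in>UNIV. (\<Sum>i\<in>UNIV. S$k$i * y$i) * (\<Sum>j\<in>UNIV. S$k$j * y$j))"
    by (simp add: power2_norm_eq_inner inner_vec_def matrix_vector_mult_def)
  also have "\<dots> = (\<Sum>k\<in>UNIV. \<Sum>i\<in>UNIV. \<Sum>j\<in>UNIV. y$i * y$j * (S$k$j * S$k$i))"
    by (simp add: sum_distrib_left sum_distrib_right mult_ac)
  also have "\<dots> = (\<Sum>i\<in>UNIV. \<Sum>j\<in>UNIV. \<Sum>k\<in>UNIV. y$i * y$j * (S$k$j * S$k$i))"
    by (subst sum.swap, rule sum.cong[OF refl], rule sum.swap)
  also have "\<dots> = trace ((\<chi> i j. y $ i * y $ j) ** (transpose S ** S))"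
    by (simp add: trace_def matrix_matrix_mult_def transpose_def sum_distrib_left)
  finally show ?thesis .
qed

lemma RF_trace:
  fixes S Sk :: "real^'K^'K" and v :: "'x \<Rightarrow> real^'K"
  assumes "finite X"
  shows "RF X v lam Sk S = 1/2 * trace ((Amat X v Sk + lam *\<^sub>R mat 1) ** (transpose S ** S))
           - 1/2 * ln (det (S ** transpose S))"
proof -
  let ?G = "transpose S ** S"
  have q: "(\<Sum>x\<in>X. (0.5 / norm (Sk *v v x)) * (norm (S *v v x))^2)
        = 1/2 * trace (Amat X v Sk ** ?G)"
    unfolding Amat_def trace_lin_sum[OF assms] quad_trace
    by (simp add: sum_distrib_left)
  have f: "(frob_norm S)^2 = trace ?G"
  proof -
    have "(frob_norm S)^2 = (\<Sum>i\<in>UNIV. \<Sum>j\<in>UNIV. (S $ i $ j)^2)"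
      unfolding frob_norm_def by (simp add: sum_nonneg)
    also have "\<dots> = trace (S ** transpose S)"
      by (simp add: trace_def matrix_matrix_mult_def transpose_def power2_eq_square)
    also have "\<dots> = trace ?G" by (rule trace_mul_sym)
    finally show ?thesis .
  qed
  have "trace ((Amat X v Sk + lam *\<^sub>R mat 1) ** ?G) = trace (Amat X v Sk ** ?G) + lam * trace ?G"
    by (simp add: trace_lin_add trace_lin_scale)
  then show ?thesis unfolding RF_def q f by (simp add: algebra_simps)
qed

lemma diag_mult: fixes a b :: "'n::finite \<Rightarrow> real"
  shows "(\<chi> i j. if i = j then a i else 0) ** (\<chi> i j. if i = j then b i else 0) = (\<chi> i j. if i = j then a i * b i else 0)"
proof -
  have "(\<Sum>k\<in>UNIV. (if i = k then a i else 0) * (if k = j then b k else 0)) = (if i = j then a i * b i else 0)" for i j :: 'n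
  proof -
    have "(\<Sum>k\<in>UNIV. (if i = k then a i else 0) * (if k = j then b k else 0)) = (\<Sum>k\<in>UNIV. if k = i then a i * (if k = j then b k else 0) else 0)"
      by (rule sum.cong) auto
    also have "\<dots> = a i * (if i = j then b i else 0)" by (subst sum.delta) (rule finite, simp only: UNIV_I if_True)
    finally show ?thesis by simp
  qed
  then show ?thesis by (simp add: matrix_matrix_mult_def vec_eq_iff)
qed

theorem proposition2:
  fixes X :: "'x set" and v :: "'x \<Rightarrow> real^'K" and lam :: real
    and Sk U D :: "real^'K^'K"
  assumes "finite X"
    and "\<forall>x\<in>X. v x \<noteq> 0"
    and "lam \<ge> 0"
    and "invertible Sk"
    and "orthogonal_mat U" and "diagonal_mat D"
    and "Amat X v Sk = U ** D ** transpose U"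
    and "pos_def (D + lam *\<^sub>R mat 1)"
  shows "invertible (diag_inv_sqrt (D + lam *\<^sub>R mat 1) ** transpose U)
    \<and> (\<forall>S. invertible S \<longrightarrow>
          RF X v lam Sk (diag_inv_sqrt (D + lam *\<^sub>R mat 1) ** transpose U) \<le> RF X v lam Sk S)"
proof -
  define E where "E = D + lam *\<^sub>R mat 1"
  define R :: "real^'K^'K" where "R = (\<chi> i j. if i = j then sqrt (E$i$i) else 0)"
  define T where "T = diag_inv_sqrt E"
  have Ediag: "i \<noteq> j \<Longrightarrow> E$i$j = 0" for i j
    using assms(6) by (simp add: E_def diagonal_mat_def mat_def)
  have Epos: "E$i$i > 0" for i
  proof -
    have pos: "axis i (1::real) \<bullet> (E *v axis i 1) > 0"
      using assms(8) unfolding pos_def_def E_def[symmetric]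
      by (metis axis_eq_0_iff zero_neq_one)
    have vax: "(E *v axis i 1) $ i = E $ i $ i"
      by (metis cart_eq_inner_axis matrix_vector_mul_component)
    have "axis i (1::real) \<bullet> (E *v axis i 1) = (E *v axis i 1) $ i"
      by (simp only: inner_axis' inner_real_def mult_1)
    then have "axis i (1::real) \<bullet> (E *v axis i 1) = E$i$i" using vax by simp
    with pos show ?thesis by simp
  qed
  have Rt: "transpose R = R" by (simp add: R_def transpose_def vec_eq_iff)
  have RR: "R ** transpose R = E"
  proof -
    have "R ** R = (\<chi> i j. if i = j then sqrt (E$i$i) * sqrt (E$i$i) else 0)"
      unfolding R_def by (rule diag_mult)
    also have "\<dots> = E"
      using Ediag Epos by (auto simp: vec_eq_iff less_imp_le)
    finally show ?thesis unfolding Rt .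
  qed
  have TR: "T ** R = mat 1"
  proof -
    have "T ** R = (\<chi> i j. if i = j then 1 / sqrt (E$i$i) * sqrt (E$i$i) else 0)"
      unfolding R_def T_def diag_inv_sqrt_def by (rule diag_mult)
    also have "\<dots> = mat 1"
      using Epos by (auto simp: vec_eq_iff mat_def less_imp_le) (metis less_irrefl)
    finally show ?thesis .
  qed
  have UtU: "transpose U ** U = mat 1" and UUt: "U ** transpose U = mat 1"
    using assms(5) by (auto simp: orthogonal_mat_def)
  have detR: "det R > 0"
    unfolding R_def by (subst det_diagonal) (auto intro!: prod_pos simp: Epos)
  have detE: "det E = (det R)^2"
    unfolding RR[symmetric] by (simp add: det_mul power2_eq_square)
  have detEpos: "det E > 0" using detR detE by simp
  have detU: "(det U)^2 = 1"
    using arg_cong[OF UUt, of det] by (simp add: det_mul power2_eq_square)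
  have detT: "det T > 0"
    unfolding T_def diag_inv_sqrt_def by (subst det_diagonal) (auto intro!: prod_pos simp: Epos)
  have Aeq: "Amat X v Sk + lam *\<^sub>R mat 1 = U ** E ** transpose U"
  proof -
    have "U ** E ** transpose U = U ** D ** transpose U + lam *\<^sub>R (U ** transpose U)"
      unfolding E_def
      by (simp add: matrix_add_ldistrib matrix_add_rdistrib' matrix_scalar_ac scalar_matrix_assoc)
    then show ?thesis using assms(7) UUt by simp
  qed
  have key: "RF X v lam Sk S = 1/2 * (trace (N ** transpose N) - ln (det (N ** transpose N)))
              + 1/2 * ln (det E)"
    if dS: "det S \<noteq> 0" and N: "N = S ** U ** R" for S N
  proof -
    have NN: "N ** transpose N = S ** (U ** E ** transpose U) ** transpose S"
      unfolding N RR[symmetric] by (simp add: matrix_transpose_mul matrix_mul_assoc)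
    have tr: "trace ((Amat X v Sk + lam *\<^sub>R mat 1) ** (transpose S ** S)) = trace (N ** transpose N)"
      unfolding NN Aeq
      by (metis matrix_mul_assoc trace_mul_sym)
    have dN: "det (N ** transpose N) = det (S ** transpose S) * det E"
      unfolding N detE using detU
      by (simp add: det_mul power2_eq_square)
    have pS: "det (S ** transpose S) > 0" using dS by (auto simp: det_mul zero_less_mult_iff linorder_neq_iff)
    have "ln (det (N ** transpose N)) = ln (det (S ** transpose S)) + ln (det E)"
      unfolding dN using pS detEpos by (simp add: ln_mult)
    then show ?thesis unfolding RF_trace[OF assms(1)] tr by (simp add: field_simps)
  qed
  define S0 where "S0 = T ** transpose U"
  have dS0: "det S0 \<noteq> 0"
    unfolding S0_def using detT detU by (auto simp: det_mul)
  have N0: "S0 ** U ** R = mat 1"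
    unfolding S0_def by (metis matrix_mul_assoc UtU matrix_mul_rid TR)
  have RF0: "RF X v lam Sk S0 = 1/2 * real CARD('K) + 1/2 * ln (det E)"
    using key[OF dS0 N0[symmetric]] by (simp add: trace_I)
  have "RF X v lam Sk S0 \<le> RF X v lam Sk S" if "invertible S" for S
  proof -
    have dS: "det S \<noteq> 0" using that by (simp add: invertible_det_nz)
    define N where "N = S ** U ** R"
    have "det N \<noteq> 0" unfolding N_def using dS detU detR by (auto simp: det_mul)
    from logdet[OF this] show ?thesis unfolding RF0 key[OF dS N_def] by simp
  qed
  moreover have "invertible S0" using dS0 by (simp add: invertible_det_nz)
  ultimately show ?thesis unfolding S0_def T_def E_def by blast
qed

end
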